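(* Assume the ground-truth assumption holds for $f^*$, $\mathcal K$ and $K$. Then for any $f_{\mathrm{teacher}}\in\mathcal H$, any $T>0$ and any integer $S\ge K$, the predictor $f_T=\mathcal T^{\mathcal K}_T(f_{\mathrm{teacher}})$ satisfies $$\mathcal L(f_T)\ \le\ \mathcal L(f_{\mathrm{teacher}})+\frac{e^{-\lambda_KT}}{2-e^{-\lambda_KT}}\|f^*\|_{\mathcal D}^2-\big(1-\lambda_{S+1}^2T^2\big)\sum_{k\ge S+1}\langle f_{\mathrm{teacher}},e_k\rangle_{\mathcal D}^2 .$$
   Context: $\mathcal D$ is a probability distribution on an input space $\mathcal X$; $\langle f,g\rangle_{\mathcal D}=\mathbb E_{x\sim\mathcal D}[f(x)g(x)]$, $\|f\|_{\mathcal D}^2=\langle f,f\rangle_{\mathcal D}$. For a target $f^*\in L^2(\mathcal D)$, $\mathcal L(f)=\mathbb E_{x\sim\mathcal D}[(f(x)-f^*(x))^2]$. $\mathcal K$ is a p.s.d. kernel with $\mathcal K(x,x')=\sum_{k\ge1}\lambda_ke_k(x)e_k(x')$, $\lambda_1\ge\lambda_2\ge\dots\ge0$, $\langle e_i,e_j\rangle_{\mathcal D}=\delta_{ij}$; $\mathcal H$ is the closed span of $\{e_k\}$ in $L^2(\mathcal D)$, and $f^*\in\mathcal H$. For $f\in\mathcal H$, $\mathcal T^{\mathcal K}_t(f)=\sum_k(1-e^{-\lambda_kt})\langle f,e_k\rangle_{\mathcal D}e_k$. Ground-truth assumption (for a positive integer $K$): $\langle f^*,e_k\rangle_{\mathcal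 D}=0$ for all $k>K$, and $\langle f^*,e_k\rangle_{\mathcal D}=0$ for every $k\le K$ with $\lambda_k=0$. *)

theory Defs
  imports "HOL-Probability.Probability"
begin

text \<open>Functions in L2(D): measurable and square integrable (elements of L2(D) are
represented by functions; everything below is invariant under a.e. modification).
Spectral indices are 1-based as in the paper: only k \<ge> 1 is used.\<close>

definition sq_int :: "'x measure \<Rightarrow> ('x \<Rightarrow> real) \<Rightarrow> bool" where
  "sq_int D f \<longleftrightarrow> f \<in> borel_measurable D \<and> integrable D (\<lambda>x. (f x)\<^sup>2)"

definition ipD :: "'x measure \<Rightarrow> ('x \<Rightarrow> real) \<Rightarrow> ('x \<Rightarrow> real) \<Rightarrow> real" where
  "ipD D f g = (LINT x|D. f x * g x)"

definition normD :: "'x measure \<Rightarrow> ('x \<Rightarrow> real) \<Rightarrow> real" where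
  "normD D f = sqrt (ipD D f f)"

definition orthonormal_fam :: "'x measure \<Rightarrow> (nat \<Rightarrow> 'x \<Rightarrow> real) \<Rightarrow> bool" where
  "orthonormal_fam D e \<longleftrightarrow>
     (\<forall>i\<ge>1. sq_int D (e i)) \<and>
     (\<forall>i\<ge>1. \<forall>j\<ge>1. ipD D (e i) (e j) = (if i = j then 1 else 0))"

text \<open>H = closed span of {e_k : k \<ge> 1} in L2(D): f is an L2-limit of finite
linear combinations of the e_k.\<close>
definition in_H :: "'x measure \<Rightarrow> (nat \<Rightarrow> 'x \<Rightarrow> real) \<Rightarrow> ('x \<Rightarrow> real) \<Rightarrow> bool" where
  "in_H D e f \<longleftrightarrow> sq_int D f \<and>
     (\<forall>\<epsilon>>0. \<exists>n c. normD D (\<lambda>x. f x - (\<Sum>k\<in>{1..n}. c k * e k x)) < \<epsilon>)"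

definition lossD :: "'x measure \<Rightarrow> ('x \<Rightarrow> real) \<Rightarrow> ('x \<Rightarrow> real) \<Rightarrow> real" where
  "lossD D fstar f = (LINT x|D. (f x - fstar x)\<^sup>2)"

text \<open>g represents T_t^K(f) = \<Sum>_k (1 - exp(-\<lambda>_k t)) <f,e_k> e_k, the series
converging in L2(D).\<close>
definition is_flow :: "'x measure \<Rightarrow> (nat \<Rightarrow> 'x \<Rightarrow> real) \<Rightarrow> (nat \<Rightarrow> real) \<Rightarrow> real
     \<Rightarrow> ('x \<Rightarrow> real) \<Rightarrow> ('x \<Rightarrow> real) \<Rightarrow> bool" where
  "is_flow D e lam t f g \<longleftrightarrow> sq_int D g \<and>
     (\<lambda>n. normD D (\<lambda>x. g x - (\<Sum>k\<in>{1..n}. (1 - exp (- lam k * t)) * ipD D f (e k) * e k x)))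
       \<longlonglongrightarrow> 0"

end

theory Submission imports Defs begin

lemma sq_int_prod_integrable:
  assumes "sq_int D f" "sq_int D g"
  shows "integrable D (\<lambda>x. f x * g x)"
proof (rule Bochner_Integration.integrable_bound[where f="\<lambda>x. (f x)\<^sup>2 + (g x)\<^sup>2"])
  show "integrable D (\<lambda>x. (f x)\<^sup>2 + (g x)\<^sup>2)" using assms unfolding sq_int_def by auto
  show "(\<lambda>x. f x * g x) \<in> borel_measurable D" using assms unfolding sq_int_def by auto
  show "AE x in D. norm (f x * g x) \<le> norm ((f x)\<^sup>2 + (g x)\<^sup>2)"
  proof (rule AE_I2)
    fix x
    have "\<bar>f x * g x\<bar> \<le> (f x)\<^sup>2 + (g x)\<^sup>2"
      using sum_squares_bound[of "f x" "g x"] sum_squares_bound[of "f x" "- g x"] by (simp add: abs_le_iff)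
    then show "norm (f x * g x) \<le> norm ((f x)\<^sup>2 + (g x)\<^sup>2)" by simp
  qed
qed

lemma sq_int_add: "sq_int D f \<Longrightarrow> sq_int D g \<Longrightarrow> sq_int D (\<lambda>x. f x + g x)"
proof -
  assume a: "sq_int D f" "sq_int D g"
  have "integrable D (\<lambda>x. (f x)\<^sup>2 + 2 * (f x * g x) + (g x)\<^sup>2)"
    using a sq_int_prod_integrable[OF a] unfolding sq_int_def by auto
  moreover have "(\<lambda>x. (f x + g x)\<^sup>2) = (\<lambda>x. (f x)\<^sup>2 + 2 * (f x * g x) + (g x)\<^sup>2)"
    by (auto simp: power2_eq_square algebra_simps)
  ultimately show ?thesis using a unfolding sq_int_def by auto
qed

lemma sq_int_scale: "sq_int D f \<Longrightarrow> sq_int D (\<lambda>x. c * f x)"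
  unfolding sq_int_def by (auto simp: power_mult_distrib)

lemma sq_int_diff: "sq_int D f \<Longrightarrow> sq_int D g \<Longrightarrow> sq_int D (\<lambda>x. f x - g x)"
  using sq_int_add[of D f "\<lambda>x. (-1) * g x"] sq_int_scale[of D g "-1"] by simp

lemma sq_int_zero: "sq_int D (\<lambda>x. 0)"
  unfolding sq_int_def by simp

lemma sq_int_sum: "finite A \<Longrightarrow> (\<And>k. k \<in> A \<Longrightarrow> sq_int D (f k)) \<Longrightarrow> sq_int D (\<lambda>x. \<Sum>k\<in>A. f k x)"
proof (induction A rule: finite_induct)
  case empty then show ?case by (simp add: sq_int_zero)
next
  case (insert a A) then show ?case using sq_int_add[of D "f a" "\<lambda>x. \<Sum>k\<in>A. f k x"] by simp
qed

lemma ipD_sym: "ipD D f g = ipD D g f"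
  unfolding ipD_def by (simp add: mult.commute)

lemma ipD_add_left: "sq_int D f \<Longrightarrow> sq_int D g \<Longrightarrow> sq_int D h \<Longrightarrow>
   ipD D (\<lambda>x. f x + g x) h = ipD D f h + ipD D g h"
  unfolding ipD_def using sq_int_prod_integrable[of D f h] sq_int_prod_integrable[of D g h]
  by (simp add: distrib_right)

lemma ipD_scale_left: "ipD D (\<lambda>x. c * f x) h = c * ipD D f h"
  unfolding ipD_def by (simp add: mult.assoc)

lemma ipD_diff_left: "sq_int D f \<Longrightarrow> sq_int D g \<Longrightarrow> sq_int D h \<Longrightarrow>
   ipD D (\<lambda>x. f x - g x) h = ipD D f h - ipD D g h"
  using ipD_add_left[of D f "\<lambda>x. (-1) * g x" h] sq_int_scale[of D g "-1"] ipD_scale_left[of D "-1" g h]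
  by simp

lemma ipD_diff_right: "sq_int D f \<Longrightarrow> sq_int D g \<Longrightarrow> sq_int D h \<Longrightarrow>
   ipD D h (\<lambda>x. f x - g x) = ipD D h f - ipD D h g"
  using ipD_diff_left[of D f g h] by (simp add: ipD_sym)

lemma ipD_sum_left: "finite A \<Longrightarrow> (\<And>k. k \<in> A \<Longrightarrow> sq_int D (f k)) \<Longrightarrow> sq_int D h \<Longrightarrow>
   ipD D (\<lambda>x. \<Sum>k\<in>A. f k x) h = (\<Sum>k\<in>A. ipD D (f k) h)"
proof (induction A rule: finite_induct)
  case empty then show ?case by (simp add: ipD_def)
next
  case (insert a A) then show ?case
    using ipD_add_left[of D "f a" "\<lambda>x. \<Sum>k\<in>A. f k x" h] sq_int_sum[of A D f] by simp
qed

lemma ipD_nonneg: "ipD D f f \<ge> 0"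
  unfolding ipD_def by simp

lemma Q_diff: "sq_int D u \<Longrightarrow> sq_int D v \<Longrightarrow>
  ipD D (\<lambda>x. u x - v x) (\<lambda>x. u x - v x) = ipD D u u - 2 * ipD D u v + ipD D v v"
  using sq_int_diff[of D u v]
  by (simp add: ipD_diff_left ipD_diff_right ipD_sym[of D v u])

lemma Q_add_le: "sq_int D u \<Longrightarrow> sq_int D v \<Longrightarrow>
  ipD D (\<lambda>x. u x - v x) (\<lambda>x. u x - v x) \<le> 2 * ipD D u u + 2 * ipD D v v"
proof -
  assume a: "sq_int D u" "sq_int D v"
  have "sq_int D (\<lambda>x. -v x)" using sq_int_scale[OF a(2), of "-1"] by simp
  from Q_diff[OF a(1) this] have "ipD D (\<lambda>x. u x + v x) (\<lambda>x. u x + v x) = ipD D u u + 2 * ipD D u v + ipD D v v"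
    by (simp add: ipD_def)
  then show ?thesis using Q_diff[OF a] ipD_nonneg[of D "\<lambda>x. u x + v x"] by linarith
qed


lemma on_sq: "orthonormal_fam D e \<Longrightarrow> k \<ge> 1 \<Longrightarrow> sq_int D (e k)"
  unfolding orthonormal_fam_def by blast

lemma on_ip: "orthonormal_fam D e \<Longrightarrow> i \<ge> 1 \<Longrightarrow> j \<ge> 1 \<Longrightarrow> ipD D (e i) (e j) = (if i = j then 1 else 0)"
  unfolding orthonormal_fam_def by blast

lemma comb_term: "orthonormal_fam D e \<Longrightarrow> A \<subseteq> {1..} \<Longrightarrow> k \<in> A \<Longrightarrow> sq_int D (\<lambda>x. c k * e k x)"
  by (rule sq_int_scale, rule on_sq) (assumption, blast)

lemma comb_sq: "orthonormal_fam D e \<Longrightarrow> finite A \<Longrightarrow> A \<subseteq> {1..} \<Longrightarrow>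
   sq_int D (\<lambda>x. \<Sum>k\<in>A. c k * e k x)"
  by (rule sq_int_sum) (assumption, rule comb_term)

lemma ip_comb_e: assumes "orthonormal_fam D e" "finite A" "A \<subseteq> {1..}" "j \<ge> 1"
  shows "ipD D (\<lambda>x. \<Sum>k\<in>A. c k * e k x) (e j) = (if j \<in> A then c j else 0)"
proof -
  have "ipD D (\<lambda>x. \<Sum>k\<in>A. c k * e k x) (e j) = (\<Sum>k\<in>A. ipD D (\<lambda>x. c k * e k x) (e j))"
    using assms(2) comb_term[OF assms(1,3)] on_sq[OF assms(1,4)] by (rule ipD_sum_left)
  also have "\<dots> = (\<Sum>k\<in>A. if k = j then c j else 0)"
  proof (rule sum.cong)
    fix k assume "k \<in> A"
    then have "k \<ge> 1" using assms(3) by blast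
    then show "ipD D (\<lambda>x. c k * e k x) (e j) = (if k = j then c j else 0)"
      using on_ip[OF assms(1) \<open>k \<ge> 1\<close> assms(4)] by (simp add: ipD_scale_left)
  qed simp
  also have "\<dots> = (if j \<in> A then c j else 0)"
    using assms(2) by (simp add: sum.delta')
  finally show ?thesis .
qed

lemma ip_h_comb: assumes "orthonormal_fam D e" "finite A" "A \<subseteq> {1..}" "sq_int D h"
  shows "ipD D h (\<lambda>x. \<Sum>k\<in>A. c k * e k x) = (\<Sum>k\<in>A. c k * ipD D h (e k))"
proof -
  have "ipD D h (\<lambda>x. \<Sum>k\<in>A. c k * e k x) = ipD D (\<lambda>x. \<Sum>k\<in>A. c k * e k x) h"
    by (rule ipD_sym)
  also have "\<dots> = (\<Sum>k\<in>A. ipD D (\<lambda>x. c k * e k x) h)"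
    using assms(2) comb_term[OF assms(1,3)] assms(4) by (rule ipD_sum_left)
  also have "\<dots> = (\<Sum>k\<in>A. c k * ipD D h (e k))"
    by (simp add: ipD_scale_left ipD_sym)
  finally show ?thesis .
qed

lemma Q_comb: assumes "orthonormal_fam D e" "finite A" "A \<subseteq> {1..}"
  shows "ipD D (\<lambda>x. \<Sum>k\<in>A. c k * e k x) (\<lambda>x. \<Sum>k\<in>A. c k * e k x) = (\<Sum>k\<in>A. (c k)\<^sup>2)"
proof -
  have "ipD D (\<lambda>x. \<Sum>k\<in>A. c k * e k x) (\<lambda>x. \<Sum>k\<in>A. c k * e k x)
      = (\<Sum>k\<in>A. c k * ipD D (\<lambda>x. \<Sum>k\<in>A. c k * e k x) (e k))"
    using assms by (intro ip_h_comb comb_sq) auto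
  also have "\<dots> = (\<Sum>k\<in>A. (c k)\<^sup>2)"
  proof (rule sum.cong)
    fix k assume "k \<in> A"
    then have "k \<ge> 1" using assms by auto
    then show "c k * ipD D (\<lambda>x. \<Sum>k\<in>A. c k * e k x) (e k) = (c k)\<^sup>2"
      using ip_comb_e[OF assms \<open>k \<ge> 1\<close>, of c] \<open>k \<in> A\<close> by (simp add: power2_eq_square)
  qed simp
  finally show ?thesis .
qed

lemma Q_approx: assumes "orthonormal_fam D e" "finite A" "A \<subseteq> {1..}" "sq_int D h"
  shows "ipD D (\<lambda>x. h x - (\<Sum>k\<in>A. c k * e k x)) (\<lambda>x. h x - (\<Sum>k\<in>A. c k * e k x))
     = ipD D h h - 2 * (\<Sum>k\<in>A. c k * ipD D h (e k)) + (\<Sum>k\<in>A. (c k)\<^sup>2)"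
  using Q_diff[OF assms(4) comb_sq[OF assms(1-3)], of c] ip_h_comb[OF assms, of c] Q_comb[OF assms(1-3), of c]
  by simp

lemma aux_sq: "2 * (c::real) * t - c\<^sup>2 \<le> t\<^sup>2"
proof -
  have "0 \<le> (c - t)\<^sup>2" by simp
  then show ?thesis by (simp add: power2_eq_square algebra_simps)
qed

lemma Q_approx_ge: assumes "orthonormal_fam D e" "finite A" "A \<subseteq> {1..}" "sq_int D h"
  shows "ipD D (\<lambda>x. h x - (\<Sum>k\<in>A. c k * e k x)) (\<lambda>x. h x - (\<Sum>k\<in>A. c k * e k x))
     \<ge> ipD D h h - (\<Sum>k\<in>A. (ipD D h (e k))\<^sup>2)"
proof -
  have "(\<Sum>k\<in>A. (ipD D h (e k))\<^sup>2) \<ge> 2 * (\<Sum>k\<in>A. c k * ipD D h (e k)) - (\<Sum>k\<in>A. (c k)\<^sup>2)"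
  proof -
    have "2 * (\<Sum>k\<in>A. c k * ipD D h (e k)) - (\<Sum>k\<in>A. (c k)\<^sup>2) = (\<Sum>k\<in>A. 2 * c k * ipD D h (e k) - (c k)\<^sup>2)"
      by (simp add: sum_subtractf sum_distrib_left mult.assoc)
    also have "\<dots> \<le> (\<Sum>k\<in>A. (ipD D h (e k))\<^sup>2)"
      by (intro sum_mono) (rule aux_sq)
    finally show ?thesis by simp
  qed
  then show ?thesis using Q_approx[OF assms, of c] by linarith
qed

lemma bessel: assumes "orthonormal_fam D e" "finite A" "A \<subseteq> {1..}" "sq_int D h"
  shows "(\<Sum>k\<in>A. (ipD D h (e k))\<^sup>2) \<le> ipD D h h"
  using Q_approx[OF assms, of "\<lambda>k. ipD D h (e k)"] ipD_nonneg[of D "\<lambda>x. h x - (\<Sum>k\<in>A. ipD D h (e k) * e k x)"]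
  by (simp add: power2_eq_square)

lemma parseval: assumes "orthonormal_fam D e" "in_H D e h"
  shows "(\<lambda>k. (ipD D h (e (k+1)))\<^sup>2) sums ipD D h h"
proof -
  have h: "sq_int D h" using assms(2) unfolding in_H_def by auto
  have ps: "(\<Sum>k<n. (ipD D h (e (k+1)))\<^sup>2) = (\<Sum>k\<in>{1..n}. (ipD D h (e k))\<^sup>2)" for n
    using sum.atLeast1_atMost_eq[of "\<lambda>k. (ipD D h (e k))\<^sup>2" n] by simp
  have b: "(\<Sum>k<n. (ipD D h (e (k+1)))\<^sup>2) \<le> ipD D h h" for n
    unfolding ps by (rule bessel[OF assms(1) _ _ h]) auto
  have sm: "summable (\<lambda>k. (ipD D h (e (k+1)))\<^sup>2)"
    by (rule summableI_nonneg_bounded[OF _ b]) simp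
  have le1: "(\<Sum>k. (ipD D h (e (k+1)))\<^sup>2) \<le> ipD D h h"
    by (rule suminf_le_const[OF sm b])
  have le2: "ipD D h h \<le> (\<Sum>k. (ipD D h (e (k+1)))\<^sup>2) + \<epsilon>\<^sup>2" if "\<epsilon> > 0" for \<epsilon>
  proof -
    obtain n c where nc: "normD D (\<lambda>x. h x - (\<Sum>k\<in>{1..n}. c k * e k x)) < \<epsilon>"
      using assms(2) \<open>\<epsilon> > 0\<close> unfolding in_H_def by blast
    let ?u = "\<lambda>x. h x - (\<Sum>k\<in>{1..n}. c k * e k x)"
    have "sqrt (ipD D ?u ?u) < \<epsilon>"
      using nc unfolding normD_def by simp
    then have "(sqrt (ipD D ?u ?u))\<^sup>2 < \<epsilon>\<^sup>2" by (intro power_strict_mono) (auto simp: ipD_nonneg)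
    then have "ipD D ?u ?u < \<epsilon>\<^sup>2" using ipD_nonneg[of D ?u] by simp
    moreover have "ipD D ?u ?u \<ge> ipD D h h - (\<Sum>k\<in>{1..n}. (ipD D h (e k))\<^sup>2)"
      by (rule Q_approx_ge[OF assms(1) _ _ h]) auto
    moreover have "(\<Sum>k\<in>{1..n}. (ipD D h (e k))\<^sup>2) \<le> (\<Sum>k. (ipD D h (e (k+1)))\<^sup>2)"
      unfolding ps[symmetric] by (rule sum_le_suminf[OF sm]) auto
    ultimately show ?thesis by linarith
  qed
  have "ipD D h h \<le> (\<Sum>k. (ipD D h (e (k+1)))\<^sup>2)"
  proof (rule field_le_epsilon)
    fix d :: real assume "d > 0"
    then show "ipD D h h \<le> (\<Sum>k. (ipD D h (e (k+1)))\<^sup>2) + d"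
      using le2[of "sqrt d"] by simp
  qed
  with le1 sm show ?thesis by (simp add: sums_iff)
qed


lemma term_low:
  fixes q qK a b :: real
  assumes "0 < q" "q \<le> qK" "qK \<le> 1"
  shows "((1-q)*a - b)\<^sup>2 \<le> (a-b)\<^sup>2 + qK/(2-qK) * b\<^sup>2"
proof -
  have p: "2 - q > 0" "2 - qK > 0" using assms by auto
  have "(2-q) * (((1-q)*a - b)\<^sup>2 - (a-b)\<^sup>2) - q * b\<^sup>2 = - q * ((2-q)*a - b)\<^sup>2"
    by (simp add: power2_eq_square algebra_simps)
  also have "\<dots> \<le> 0" using assms by (simp add: mult_nonneg_nonneg)
  finally have "(2-q) * (((1-q)*a - b)\<^sup>2 - (a-b)\<^sup>2) \<le> q * b\<^sup>2" by simp
  then have 1: "((1-q)*a - b)\<^sup>2 - (a-b)\<^sup>2 \<le> q/(2-q) * b\<^sup>2"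
    using p by (simp add: field_simps)
  have "q/(2-q) \<le> qK/(2-qK)"
    using p assms by (simp add: field_simps)
  then have "q/(2-q) * b\<^sup>2 \<le> qK/(2-qK) * b\<^sup>2" by (rule mult_right_mono) simp
  with 1 show ?thesis by simp
qed

lemma term_high:
  fixes q L T a :: real
  assumes "0 \<le> 1 - q" "1 - q \<le> L * T"
  shows "((1-q)*a)\<^sup>2 \<le> a\<^sup>2 - (1 - L\<^sup>2 * T\<^sup>2) * a\<^sup>2"
proof -
  have "(1-q)\<^sup>2 \<le> (L*T)\<^sup>2" using assms by (intro power_mono) auto
  then have "(1-q)\<^sup>2 * a\<^sup>2 \<le> (L*T)\<^sup>2 * a\<^sup>2" by (rule mult_right_mono) simp
  moreover have "((1-q)*a)\<^sup>2 = (1-q)\<^sup>2 * a\<^sup>2" by (simp add: power_mult_distrib)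
  moreover have "a\<^sup>2 - (1 - L\<^sup>2 * T\<^sup>2) * a\<^sup>2 = (L*T)\<^sup>2 * a\<^sup>2" by (simp add: power_mult_distrib algebra_simps)
  ultimately show ?thesis by simp
qed

lemma term_mid:
  fixes q a :: real
  assumes "0 < q" "q \<le> 1"
  shows "((1-q)*a)\<^sup>2 \<le> a\<^sup>2"
proof -
  have "(1-q)\<^sup>2 \<le> 1" using assms by (simp add: abs_le_iff power_le_one)
  then have "(1-q)\<^sup>2 * a\<^sup>2 \<le> 1 * a\<^sup>2" by (rule mult_right_mono) simp
  then show ?thesis by (simp add: power_mult_distrib)
qed


lemma normD_less: "0 < \<epsilon> \<Longrightarrow> normD D f < \<epsilon> \<longleftrightarrow> ipD D f f < \<epsilon>\<^sup>2"
  unfolding normD_def by (metis abs_of_pos real_sqrt_abs real_sqrt_less_iff)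

lemma sum_ext: fixes c :: "nat \<Rightarrow> real" and e :: "nat \<Rightarrow> 'a \<Rightarrow> real" shows "n \<le> N \<Longrightarrow>
  (\<Sum>k\<in>{1..N}. (if k \<le> n then c k else 0) * e k x) = (\<Sum>k\<in>{1..n}. c k * e k x)"
proof -
  assume "n \<le> N"
  have "(\<Sum>k\<in>{1..N}. (if k \<le> n then c k else 0) * e k x) = (\<Sum>k\<in>{1..N}. if k \<le> n then c k * e k x else 0)"
    by (intro sum.cong) auto
  also have "\<dots> = sum (\<lambda>k. c k * e k x) {k\<in>{1..N}. k \<le> n}"
    by (rule sum.inter_filter[symmetric]) simp
  also have "{k\<in>{1..N}. k \<le> n} = {1..n}" using \<open>n \<le> N\<close> by auto
  finally show ?thesis .
qed

lemma in_H_diff: assumes "in_H D e f" "in_H D e g" and on: "orthonormal_fam D e"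
  shows "in_H D e (\<lambda>x. f x - g x)"
proof -
  have f: "sq_int D f" and g: "sq_int D g" using assms unfolding in_H_def by auto
  show ?thesis unfolding in_H_def
  proof (intro conjI allI impI)
    show "sq_int D (\<lambda>x. f x - g x)" using f g by (rule sq_int_diff)
    fix \<epsilon> :: real assume "\<epsilon> > 0"
    then have "\<epsilon>/2 > 0" by simp
    then obtain n c where nc: "normD D (\<lambda>x. f x - (\<Sum>k\<in>{1..n}. c k * e k x)) < \<epsilon>/2"
      using assms(1) unfolding in_H_def by blast
    obtain m d where md: "normD D (\<lambda>x. g x - (\<Sum>k\<in>{1..m}. d k * e k x)) < \<epsilon>/2"
      using assms(2) \<open>\<epsilon>/2 > 0\<close> unfolding in_H_def by blast
    define N where "N = max n m"
    define c' where "c' k = (if k \<le> n then c k else 0)" for k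
    define d' where "d' k = (if k \<le> m then d k else 0)" for k
    let ?u = "\<lambda>x. f x - (\<Sum>k\<in>{1..n}. c k * e k x)"
    let ?v = "\<lambda>x. g x - (\<Sum>k\<in>{1..m}. d k * e k x)"
    have eq: "(\<lambda>x. f x - g x - (\<Sum>k\<in>{1..N}. (c' k - d' k) * e k x)) = (\<lambda>x. ?u x - ?v x)"
    proof
      fix x
      have "(\<Sum>k\<in>{1..N}. (c' k - d' k) * e k x) = (\<Sum>k\<in>{1..N}. c' k * e k x) - (\<Sum>k\<in>{1..N}. d' k * e k x)"
        by (simp add: left_diff_distrib sum_subtractf)
      also have "\<dots> = (\<Sum>k\<in>{1..n}. c k * e k x) - (\<Sum>k\<in>{1..m}. d k * e k x)"
        unfolding c'_def d'_def using sum_ext[of n N c e x] sum_ext[of m N d e x] by (simp add: N_def)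
      finally show "f x - g x - (\<Sum>k\<in>{1..N}. (c' k - d' k) * e k x) = ?u x - ?v x" by simp
    qed
    have uq: "ipD D ?u ?u < (\<epsilon>/2)\<^sup>2" using nc normD_less[OF \<open>\<epsilon>/2 > 0\<close>] by blast
    have vq: "ipD D ?v ?v < (\<epsilon>/2)\<^sup>2" using md normD_less[OF \<open>\<epsilon>/2 > 0\<close>] by blast
    have su: "sq_int D ?u" "sq_int D ?v"
      using sq_int_diff[OF f comb_sq[OF on, of "{1..n}" c]] sq_int_diff[OF g comb_sq[OF on, of "{1..m}" d]]
      by auto
    have "ipD D (\<lambda>x. ?u x - ?v x) (\<lambda>x. ?u x - ?v x) < \<epsilon>\<^sup>2"
      using Q_add_le[OF su] uq vq by (simp add: power_divide)
    then have "normD D (\<lambda>x. ?u x - ?v x) < \<epsilon>" using normD_less[OF \<open>\<epsilon> > 0\<close>] by blast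
    then show "\<exists>n c. normD D (\<lambda>x. f x - g x - (\<Sum>k\<in>{1..n}. c k * e k x)) < \<epsilon>"
      using eq by metis
  qed
qed


lemma flow_in_H: assumes on: "orthonormal_fam D e" and fl: "is_flow D e lam t f g"
  shows "in_H D e g"
proof -
  have g: "sq_int D g" and lim: "(\<lambda>n. normD D (\<lambda>x. g x - (\<Sum>k\<in>{1..n}. (1 - exp (- lam k * t)) * ipD D f (e k) * e k x))) \<longlonglongrightarrow> 0"
    using fl unfolding is_flow_def by auto
  show ?thesis unfolding in_H_def
  proof (intro conjI allI impI)
    show "sq_int D g" by (rule g)
    fix \<epsilon> :: real assume "\<epsilon> > 0"
    from order_tendstoD(2)[OF lim this] obtain N where
      "\<And>n. n \<ge> N \<Longrightarrow> normD D (\<lambda>x. g x - (\<Sum>k\<in>{1..n}. (1 - exp (- lam k * t)) * ipD D f (e k) * e k x)) < \<epsilon>"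
      unfolding eventually_sequentially by blast
    then have "normD D (\<lambda>x. g x - (\<Sum>k\<in>{1..N}. (1 - exp (- lam k * t)) * ipD D f (e k) * e k x)) < \<epsilon>" by simp
    then show "\<exists>n c. normD D (\<lambda>x. g x - (\<Sum>k\<in>{1..n}. c k * e k x)) < \<epsilon>"
      by (intro exI[of _ N] exI[of _ "\<lambda>k. (1 - exp (- lam k * t)) * ipD D f (e k)"])
  qed
qed

lemma flow_coef: assumes on: "orthonormal_fam D e" and fl: "is_flow D e lam t f g" and j: "j \<ge> 1"
  shows "ipD D g (e j) = (1 - exp (- lam j * t)) * ipD D f (e j)"
proof -
  define c where "c k = (1 - exp (- lam k * t)) * ipD D f (e k)" for k
  have g: "sq_int D g" and lim: "(\<lambda>n. normD D (\<lambda>x. g x - (\<Sum>k\<in>{1..n}. c k * e k x))) \<longlonglongrightarrow> 0"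
    using fl unfolding is_flow_def c_def by auto
  let ?d = "ipD D g (e j) - c j"
  have "\<bar>?d\<bar> \<le> normD D (\<lambda>x. g x - (\<Sum>k\<in>{1..n}. c k * e k x))" if "n \<ge> j" for n
  proof -
    let ?u = "\<lambda>x. g x - (\<Sum>k\<in>{1..n}. c k * e k x)"
    have cs: "sq_int D (\<lambda>x. \<Sum>k\<in>{1..n}. c k * e k x)" by (rule comb_sq[OF on]) auto
    have ej: "sq_int D (e j)" using on_sq[OF on j] .
    have u: "sq_int D ?u" using sq_int_diff[OF g cs] .
    have "ipD D ?u (e j) = ipD D g (e j) - ipD D (\<lambda>x. \<Sum>k\<in>{1..n}. c k * e k x) (e j)"
      by (rule ipD_diff_left[OF g cs ej])
    also have "ipD D (\<lambda>x. \<Sum>k\<in>{1..n}. c k * e k x) (e j) = c j"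
      using ip_comb_e[OF on _ _ j, of "{1..n}" c] that j by auto
    finally have eq: "ipD D ?u (e j) = ?d" .
    have "(\<Sum>k\<in>{j}. (ipD D ?u (e k))\<^sup>2) \<le> ipD D ?u ?u"
      by (rule bessel[OF on _ _ u]) (use j in auto)
    then have "?d\<^sup>2 \<le> ipD D ?u ?u" using eq by simp
    then have "sqrt (?d\<^sup>2) \<le> sqrt (ipD D ?u ?u)" by (rule real_sqrt_le_mono)
    then show ?thesis unfolding normD_def by simp
  qed
  then have "\<bar>?d\<bar> \<le> 0" by (intro LIMSEQ_le_const[OF lim]) blast
  then show ?thesis unfolding c_def by simp
qed

lemma lam_mono: assumes "\<forall>k\<ge>1. lam (Suc k) \<le> (lam k :: real)" "1 \<le> i" "i \<le> j"
  shows "lam j \<le> lam i"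
  using assms(3)
proof (induction j rule: dec_induct)
  case base then show ?case by simp
next
  case (step n)
  then have "lam (Suc n) \<le> lam n" using assms(1,2) by simp
  with step show ?case by simp
qed


lemma lossD_ipD: "lossD D fs f = ipD D (\<lambda>x. f x - fs x) (\<lambda>x. f x - fs x)"
  unfolding lossD_def ipD_def by (simp add: power2_eq_square)

theorem lemma6p2:
  fixes D :: "'x measure" and Ker :: "'x \<Rightarrow> 'x \<Rightarrow> real"
    and lam :: "nat \<Rightarrow> real" and e :: "nat \<Rightarrow> 'x \<Rightarrow> real"
    and fstar fteacher fT :: "'x \<Rightarrow> real" and K S :: nat and T :: real
  assumes "prob_space D"
    and "orthonormal_fam D e"
    and "\<forall>k\<ge>1. lam k \<ge> 0" and "\<forall>k\<ge>1. lam (Suc k) \<le> lam k"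
    and "\<forall>x x'. (\<lambda>k. lam (Suc k) * e (Suc k) x * e (Suc k) x') sums Ker x x'"
    and "in_H D e fstar"
    and "K \<ge> 1"
    and "\<forall>k>K. ipD D fstar (e k) = 0"
    and "\<forall>k\<in>{1..K}. lam k = 0 \<longrightarrow> ipD D fstar (e k) = 0"
    and "in_H D e fteacher" and "T > 0" and "S \<ge> K"
    and "is_flow D e lam T fteacher fT"
  shows "lossD D fstar fT \<le> lossD D fstar fteacher
           + exp (- lam K * T) / (2 - exp (- lam K * T)) * (normD D fstar)\<^sup>2
           - (1 - (lam (S + 1))\<^sup>2 * T\<^sup>2) * (\<Sum>k. (ipD D fteacher (e (k + S + 1)))\<^sup>2)"
proof -
  note on = assms(2) and lampos = assms(3) and lammono = assms(4)
  note Hs = assms(6) and Ht = assms(10) and fl = assms(13)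
  define a where "a k = ipD D fteacher (e (k+1))" for k
  define b where "b k = ipD D fstar (e (k+1))" for k
  define q where "q k = exp (- lam (k+1) * T)" for k
  define qK where "qK = exp (- lam K * T)"
  define c where "c = qK / (2 - qK)"
  define m where "m = 1 - (lam (S + 1))\<^sup>2 * T\<^sup>2"
  define W where "W k = (if S \<le> k then (a k)\<^sup>2 else 0)" for k
  have sqs: "sq_int D fstar" using Hs unfolding in_H_def by auto
  have sqt: "sq_int D fteacher" using Ht unfolding in_H_def by auto
  have HT: "in_H D e fT" by (rule flow_in_H[OF on fl])
  have sqT: "sq_int D fT" using HT unfolding in_H_def by auto
  have ek: "sq_int D (e (k+1))" for k by (rule on_sq[OF on]) simp
  have P1: "(\<lambda>k. ((1 - q k) * a k - b k)\<^sup>2) sums lossD D fstar fT"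
  proof -
    have "(\<lambda>k. (ipD D (\<lambda>x. fT x - fstar x) (e (k+1)))\<^sup>2) sums ipD D (\<lambda>x. fT x - fstar x) (\<lambda>x. fT x - fstar x)"
      by (rule parseval[OF on in_H_diff[OF HT Hs on]])
    moreover have "ipD D (\<lambda>x. fT x - fstar x) (e (k+1)) = (1 - q k) * a k - b k" for k
      using ipD_diff_left[OF sqT sqs ek[of k]] flow_coef[OF on fl, of "k+1"]
      unfolding a_def b_def q_def by simp
    ultimately show ?thesis by (simp add: lossD_ipD)
  qed
  have P2: "(\<lambda>k. (a k - b k)\<^sup>2) sums lossD D fstar fteacher"
  proof -
    have "(\<lambda>k. (ipD D (\<lambda>x. fteacher x - fstar x) (e (k+1)))\<^sup>2) sums ipD D (\<lambda>x. fteacher x - fstar x) (\<lambda>x. fteacher x - fstar x)"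
      by (rule parseval[OF on in_H_diff[OF Ht Hs on]])
    moreover have "ipD D (\<lambda>x. fteacher x - fstar x) (e (k+1)) = a k - b k" for k
      using ipD_diff_left[OF sqt sqs ek[of k]] unfolding a_def b_def by simp
    ultimately show ?thesis by (simp add: lossD_ipD)
  qed
  have P3: "(\<lambda>k. (b k)\<^sup>2) sums (normD D fstar)\<^sup>2"
    using parseval[OF on Hs] ipD_nonneg[of D fstar] unfolding b_def normD_def by simp
  have P4: "summable (\<lambda>k. (a k)\<^sup>2)"
    using parseval[OF on Ht] unfolding a_def by (simp add: sums_iff)
  have sW: "summable W"
    by (rule summable_comparison_test'[OF P4, of 0]) (simp add: W_def)
  have Wshift: "suminf W = (\<Sum>k. (ipD D fteacher (e (k + S + 1)))\<^sup>2)"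
  proof -
    have "suminf W = (\<Sum>n. W (n + S)) + (\<Sum>i<S. W i)" by (rule suminf_split_initial_segment[OF sW])
    moreover have "(\<Sum>i<S. W i) = 0" by (simp add: W_def)
    moreover have "W (n + S) = (ipD D fteacher (e (n + S + 1)))\<^sup>2" for n
      by (simp add: W_def a_def)
    ultimately show ?thesis by simp
  qed
  have PR: "(\<lambda>k. (a k - b k)\<^sup>2 + c * (b k)\<^sup>2 - m * W k) sums
      (lossD D fstar fteacher + c * (normD D fstar)\<^sup>2 - m * suminf W)"
    by (intro sums_diff sums_add sums_mult P2 P3 summable_sums sW)
  have lamK: "lam K \<ge> 0" using lampos assms(7) by simp
  have qK1: "qK \<le> 1" unfolding qK_def using lamK assms(11) by simp
  have termw: "((1 - q k) * a k - b k)\<^sup>2 \<le> (a k - b k)\<^sup>2 + c * (b k)\<^sup>2 - m * W k" for k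
  proof (cases "k + 1 \<le> K")
    case True
    then have "lam K \<le> lam (k+1)" using lam_mono[OF lammono, of "k+1" K] by simp
    then have "q k \<le> qK" unfolding q_def qK_def using assms(11) by (simp add: mult_right_mono)
    moreover have "0 < q k" unfolding q_def by simp
    moreover have "W k = 0" unfolding W_def using True assms(12) by simp
    ultimately show ?thesis using term_low[of "q k" qK "a k" "b k"] qK1 unfolding c_def by simp
  next
    case False
    then have b0: "b k = 0" unfolding b_def using assms(8) by simp
    have l0: "lam (k+1) \<ge> 0" using lampos by simp
    have q1: "0 < q k" "q k \<le> 1" unfolding q_def using l0 assms(11) by auto
    show ?thesis
    proof (cases "S \<le> k")
      case True
      have "lam (k+1) \<le> lam (S+1)" using lam_mono[OF lammono, of "S+1" "k+1"] True by simp
      moreover have "1 - q k \<le> lam (k+1) * T"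
        unfolding q_def using exp_ge_add_one_self[of "- lam (k+1) * T"] by simp
      ultimately have "1 - q k \<le> lam (S+1) * T" using assms(11)
        by (smt (verit) mult_right_mono)
      then have "((1 - q k) * a k)\<^sup>2 \<le> (a k)\<^sup>2 - m * (a k)\<^sup>2"
        unfolding m_def using term_high[of "q k" "lam (S+1)" T "a k"] q1 by simp
      then show ?thesis using b0 True unfolding W_def by simp
    next
      case False
      then show ?thesis using b0 term_mid[OF q1, of "a k"] unfolding W_def by simp
    qed
  qed
  have "lossD D fstar fT \<le> lossD D fstar fteacher + c * (normD D fstar)\<^sup>2 - m * suminf W"
    by (rule sums_le[OF termw P1 PR])
  then show ?thesis unfolding Wshift c_def qK_def m_def .
qed

end
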